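(* There exists a domain $\mathcal{X}$ and a concept class $\mathcal{C}\subseteq\{\pm1\}^{\mathcal{X}}$ with $\mathrm{VCdim}(\mathcal{C})=1$ such that the following holds. For every horizon $T\ge 1$ there exists an (oblivious, randomized) adversary strategy in the adversarial injection model with unknown $\mathcal{D}$, i.e. a random choice of target $c^\star\in\mathcal{C}$, of distribution $\mathcal{D}$ over $\mathcal{X}$, of the hidden bits $q_1,\dots,q_T$ and of the injected points, all made independently of the learner's actions, such that every learner satisfies \[ \mathbb{E}[err_{\mathrm{mis}}]+\mathbb{E}[err_{\mathrm{abs}}]=\Omega(\sqrt{T}), \] where the constant in $\Omega(\cdot)$ is absolute and the expectation is over the adversary's randomness, the i.i.d. draws and the learner's randomness.
   Context: Adversarial injection model: $\mathcal{X}$ is a domain, $\mathcal{C}\subseteq\{\pm1\}^{\mathcal{X}}$ a concept class. An adversary fixes (possibly at random) a target $c^\star\in\mathcal{C}$ and a distribution $\mathcal{D}$ over $\mathcal{X}$, both unknown to the learner and fixed throughout. For rounds $t=1,\dots,T$: the adversary chooses a hidden bit $q_t\in\{0,1\}$; if $q_t=0$, $x_t\sim\mathcal{D}$ is drawn independently of the past (an i.i.d. round); if $q_t=1$, the adversary chooses $x_t\in\mathcal{X}$ arbitrarily (an injected round). The adversary's choices at round $t$ may depend on the history up to round $t-1$. The learner observes $x_t$ (never $q_t$), outputs $\hat y_t\in\{+1,-1,\perp\}$ (where $\perp$ means abstain), and then observes the true label $y_t=c^\star(x_t)$. The errors are $err_{\mathrm{mis}}=\sum_{t=1}^T\mathbf{1}[\hat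 y_t\ne y_t\wedge \hat y_t\ne\perp]$ and $err_{\mathrm{abs}}=\sum_{t=1}^T\mathbf{1}[\hat y_t=\perp\wedge q_t=0]$. *)

theory Defs
  imports "HOL-Probability.Probability" "HOL-Library.Extended_Nat"
begin

text \<open>Domain: nat. Labels: True = +1, False = -1. Predictions: Some b, or None = abstain.\<close>

definition shatters :: "(nat \<Rightarrow> bool) set \<Rightarrow> nat set \<Rightarrow> bool" where
  "shatters C S \<longleftrightarrow> (\<forall>B \<subseteq> S. \<exists>c \<in> C. \<forall>x \<in> S. c x \<longleftrightarrow> x \<in> B)"

definition vc_dim :: "(nat \<Rightarrow> bool) set \<Rightarrow> enat" where
  "vc_dim C = Sup {enat (card S) | S. finite S \<and> shatters C S}"

text \<open>What the learner sees after each round: point, its own prediction, true label.\<close>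
type_synonym history = "(nat \<times> bool option \<times> bool) list"

type_synonym learner = "history \<Rightarrow> nat \<Rightarrow> bool option pmf"

text \<open>Full record of a round: point, prediction, true label, hidden bit q.\<close>
type_synonym trace = "(nat \<times> bool option \<times> bool \<times> bool) list"

definition visible :: "trace \<Rightarrow> history" where
  "visible h = map (\<lambda>(x, p, y, q). (x, p, y)) h"

text \<open>Oblivious adversary's choice: target, distribution D, hidden bits q, injected points z.
  Round t (0-based) draws x_t ~ D if q t is False, otherwise x_t = z t.\<close>
fun run :: "learner \<Rightarrow> (nat \<Rightarrow> bool) \<Rightarrow> nat pmf \<Rightarrow> (nat \<Rightarrow> bool) \<Rightarrow> (nat \<Rightarrow> nat) \<Rightarrow> nat \<Rightarrow> trace pmf" where
  "run L c D q z 0 = return_pmf []"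
| "run L c D q z (Suc t) =
     bind_pmf (run L c D q z t) (\<lambda>h.
     bind_pmf (if q t then return_pmf (z t) else D) (\<lambda>x.
     bind_pmf (L (visible h) x) (\<lambda>p.
     return_pmf (h @ [(x, p, c x, q t)]))))"

definition err_mis :: "trace \<Rightarrow> nat" where
  "err_mis h = length (filter (\<lambda>(x, p, y, q). p \<noteq> None \<and> p \<noteq> Some y) h)"

definition err_abs :: "trace \<Rightarrow> nat" where
  "err_abs h = length (filter (\<lambda>(x, p, y, q). p = None \<and> \<not> q) h)"

type_synonym adversary = "((nat \<Rightarrow> bool) \<times> nat pmf \<times> (nat \<Rightarrow> bool) \<times> (nat \<Rightarrow> nat)) pmf"

definition game :: "adversary \<Rightarrow> learner \<Rightarrow> nat \<Rightarrow> trace pmf" where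
  "game A L T = bind_pmf A (\<lambda>(c, D, q, z). run L c D q z T)"

end

theory Submission
  imports Defs "HOL-Library.Nat_Bijection"
begin


fun grun :: "learner \<Rightarrow> (nat \<Rightarrow> bool) \<Rightarrow> (nat \<Rightarrow> nat pmf) \<Rightarrow> (nat \<Rightarrow> bool) \<Rightarrow> nat \<Rightarrow> trace pmf" where
  "grun L c X q 0 = return_pmf []"
| "grun L c X q (Suc t) = bind_pmf (grun L c X q t) (\<lambda>h. bind_pmf (X t) (\<lambda>x.
     bind_pmf (L (visible h) x) (\<lambda>p. return_pmf (h @ [(x, p, c x, q t)]))))"

fun vrun :: "learner \<Rightarrow> (nat \<Rightarrow> bool) \<Rightarrow> (nat \<Rightarrow> nat pmf) \<Rightarrow> nat \<Rightarrow> history pmf" where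
  "vrun L c X 0 = return_pmf []"
| "vrun L c X (Suc t) = bind_pmf (vrun L c X t) (\<lambda>h. bind_pmf (X t) (\<lambda>x.
     map_pmf (\<lambda>p. h @ [(x, p, c x)]) (L h x)))"

fun ulist :: "(nat \<Rightarrow> nat pmf) \<Rightarrow> nat \<Rightarrow> nat list pmf" where
  "ulist \<mu> 0 = return_pmf []"
| "ulist \<mu> (Suc n) = bind_pmf (ulist \<mu> n) (\<lambda>l. map_pmf (\<lambda>i. l @ [i]) (\<mu> n))"

lemma run_grun: "run L c D q z t = grun L c (\<lambda>t. if q t then return_pmf (z t) else D) q t"
  by (induction t) auto

lemma grun_cong: "(\<And>s. s < t \<Longrightarrow> X s = X' s) \<Longrightarrow> grun L c X q t = grun L c X' q t"
  by (induction t) auto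

lemma vrun_cong: "(\<And>s. s < t \<Longrightarrow> X s = X' s) \<Longrightarrow> vrun L c X t = vrun L c X' t"
  by (induction t) auto

lemma visible_snoc: "visible (h @ [(x, p, y, qq)]) = visible h @ [(x, p, y)]"
  by (simp add: visible_def)

lemma map_visible_grun: "map_pmf visible (grun L c X q t) = vrun L c X t"
proof (induction t)
  case 0
  then show ?case by (simp add: visible_def)
next
  case (Suc t)
  have "map_pmf visible (grun L c X q (Suc t)) =
    bind_pmf (grun L c X q t) (\<lambda>h. bind_pmf (X t) (\<lambda>x.
     map_pmf (\<lambda>p. visible h @ [(x, p, c x)]) (L (visible h) x)))"
    by (simp add: map_bind_pmf map_pmf_def[symmetric] pmf.map_comp o_def visible_snoc)
  also have "\<dots> = bind_pmf (map_pmf visible (grun L c X q t)) (\<lambda>h. bind_pmf (X t) (\<lambda>x.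
     map_pmf (\<lambda>p. h @ [(x, p, c x)]) (L h x)))"
    by (simp add: bind_map_pmf)
  finally show ?case using Suc by simp
qed

lemma set_ulist: "l \<in> set_pmf (ulist \<mu> n) \<Longrightarrow> length l = n"
  by (induction n arbitrary: l) auto

lemma mix_grun:
  "bind_pmf (ulist \<mu> n) (\<lambda>u. grun L c (\<lambda>t. Y t (u ! t)) q n) = grun L c (\<lambda>t. bind_pmf (\<mu> t) (Y t)) q n"
proof (induction n)
  case 0
  then show ?case by simp
next
  case (Suc n)
  define S where "S = (\<lambda>N h. bind_pmf N (\<lambda>x.
     bind_pmf (L (visible h) x) (\<lambda>p. return_pmf (h @ [(x, p, c x, q n)]))))"
  have 1: "grun L c (\<lambda>t. Y t ((l @ [i]) ! t)) q (Suc n) = bind_pmf (grun L c (\<lambda>t. Y t (l ! t)) q n) (S (Y n i))"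
    if "length l = n" for l i
  proof -
    have "grun L c (\<lambda>t. Y t ((l @ [i]) ! t)) q n = grun L c (\<lambda>t. Y t (l ! t)) q n"
      by (rule grun_cong) (simp add: nth_append that)
    then show ?thesis using that by (simp add: S_def nth_append)
  qed
  have "bind_pmf (ulist \<mu> (Suc n)) (\<lambda>u. grun L c (\<lambda>t. Y t (u ! t)) q (Suc n))
     = bind_pmf (ulist \<mu> n) (\<lambda>l. bind_pmf (\<mu> n) (\<lambda>i. bind_pmf (grun L c (\<lambda>t. Y t (l ! t)) q n) (S (Y n i))))"
  proof -
    have "bind_pmf (ulist \<mu> (Suc n)) (\<lambda>u. grun L c (\<lambda>t. Y t (u ! t)) q (Suc n))
      = bind_pmf (ulist \<mu> n) (\<lambda>l. bind_pmf (\<mu> n) (\<lambda>i. grun L c (\<lambda>t. Y t ((l @ [i]) ! t)) q (Suc n)))"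
      by (simp only: ulist.simps bind_assoc_pmf bind_map_pmf)
    also have "\<dots> = bind_pmf (ulist \<mu> n) (\<lambda>l. bind_pmf (\<mu> n) (\<lambda>i. bind_pmf (grun L c (\<lambda>t. Y t (l ! t)) q n) (S (Y n i))))"
    proof (rule bind_pmf_cong[OF refl], rule bind_pmf_cong[OF refl])
      fix l i assume "l \<in> set_pmf (ulist \<mu> n)"
      then show "grun L c (\<lambda>t. Y t ((l @ [i]) ! t)) q (Suc n) = bind_pmf (grun L c (\<lambda>t. Y t (l ! t)) q n) (S (Y n i))"
        by (intro 1) (simp add: set_ulist)
    qed
    finally show ?thesis .
  qed
  also have "\<dots> = bind_pmf (ulist \<mu> n) (\<lambda>l. bind_pmf (grun L c (\<lambda>t. Y t (l ! t)) q n) (\<lambda>h. bind_pmf (\<mu> n) (\<lambda>i. S (Y n i) h)))"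
    by (subst bind_commute_pmf) simp
  also have "\<dots> = bind_pmf (ulist \<mu> n) (\<lambda>l. bind_pmf (grun L c (\<lambda>t. Y t (l ! t)) q n) (S (bind_pmf (\<mu> n) (Y n))))"
    by (simp add: S_def bind_assoc_pmf)
  also have "\<dots> = bind_pmf (bind_pmf (ulist \<mu> n) (\<lambda>l. grun L c (\<lambda>t. Y t (l ! t)) q n)) (S (bind_pmf (\<mu> n) (Y n)))"
    by (simp add: bind_assoc_pmf)
  also have "\<dots> = grun L c (\<lambda>t. bind_pmf (\<mu> t) (Y t)) q (Suc n)"
    by (simp add: Suc S_def)
  finally show ?case .
qed



lemma pmf_bind_pair: "pmf (bind_pmf M (\<lambda>a. map_pmf (Pair a) (N a))) (a, b) = pmf M a * pmf (N a) b"
proof -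
  have "pmf (map_pmf (Pair a') (N a')) (a, b) = (if a' = a then pmf (N a) b else 0)" for a'
  proof (cases "a' = a")
    case True
    then show ?thesis by (simp add: pmf_map_inj' inj_on_def)
  next
    case False
    then show ?thesis by (auto simp: pmf_eq_0_set_pmf)
  qed
  then have "pmf (bind_pmf M (\<lambda>a. map_pmf (Pair a) (N a))) (a, b) = measure_pmf.expectation M (\<lambda>a'. if a' = a then pmf (N a) b else 0)"
    by (simp add: pmf_bind)
  also have "\<dots> = (\<Sum>a'\<in>{a}. (if a' = a then pmf (N a) b else 0) * pmf M a')"
    by (rule integral_measure_pmf_real) (auto split: if_splits)
  finally show ?thesis by simp
qed

lemma vrun_Suc_alt: "vrun L c X (Suc n) = map_pmf (\<lambda>(h, x, p). h @ [(x, p, c x)])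
   (bind_pmf (vrun L c X n) (\<lambda>h. map_pmf (Pair h) (bind_pmf (X n) (\<lambda>x. map_pmf (Pair x) (L h x)))))"
  by (simp add: map_bind_pmf pmf.map_comp o_def)

lemma pmf_vrun_Suc:
  "pmf (vrun L c X (Suc n)) (h @ [(x, p, y)]) = pmf (vrun L c X n) h * pmf (X n) x * pmf (L h x) p * (if y = c x then 1 else 0)"
proof (cases "y = c x")
  case True
  have inj: "inj (\<lambda>(h :: history, x, p). h @ [(x, p, c x)])"
    by (auto simp: inj_on_def)
  have "pmf (vrun L c X (Suc n)) (h @ [(x, p, y)]) = pmf (vrun L c X (Suc n)) ((\<lambda>(h, x, p). h @ [(x, p, c x)]) (h, x, p))"
    using True by simp
  also have "\<dots> = pmf (bind_pmf (vrun L c X n) (\<lambda>h. map_pmf (Pair h) (bind_pmf (X n) (\<lambda>x. map_pmf (Pair x) (L h x))))) (h, x, p)"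
    unfolding vrun_Suc_alt by (rule pmf_map_inj'[OF inj])
  also have "\<dots> = pmf (vrun L c X n) h * (pmf (X n) x * pmf (L h x) p)"
    by (simp add: pmf_bind_pair)
  finally show ?thesis using True by simp
next
  case False
  then have "h @ [(x, p, y)] \<notin> set_pmf (vrun L c X (Suc n))" by auto
  then show ?thesis using False by (simp add: pmf_eq_0_set_pmf)
qed

lemma pmf_vrun_Suc_Nil: "pmf (vrun L c X (Suc n)) [] = 0"
  by (auto simp add: pmf_eq_0_set_pmf)

lemma vrun_agree:
  assumes "\<And>s x. s < n \<Longrightarrow> x \<in> set_pmf (X s) \<Longrightarrow> x \<noteq> y0 \<Longrightarrow> c1 x = c2 x"
  shows "y0 \<notin> fst ` set h \<Longrightarrow> pmf (vrun L c1 X n) h = pmf (vrun L c2 X n) h"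
  using assms
proof (induction n arbitrary: h)
  case 0
  then show ?case by simp
next
  case (Suc n)
  show ?case
  proof (cases h rule: rev_cases)
    case Nil
    then show ?thesis by (simp only: Nil pmf_vrun_Suc_Nil)
  next
    case (snoc h' e)
    obtain x p y where e: "e = (x, p, y)" by (cases e) auto
    have h': "y0 \<notin> fst ` set h'" using Suc.prems(1) snoc by auto
    have IH: "pmf (vrun L c1 X n) h' = pmf (vrun L c2 X n) h'"
      by (rule Suc.IH[OF h']) (rule Suc.prems(2), auto)
    show ?thesis
    proof (cases "x \<in> set_pmf (X n)")
      case True
      have "x \<noteq> y0" using Suc.prems(1) snoc e by auto
      then have "c1 x = c2 x" using Suc.prems(2)[of n x] True by auto
      then show ?thesis unfolding snoc e pmf_vrun_Suc using IH by simp
    next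
      case False
      then show ?thesis unfolding snoc e pmf_vrun_Suc by (simp add: pmf_eq_0_set_pmf)
    qed
  qed
qed

lemma set_vrun: "h \<in> set_pmf (vrun L c X n) \<Longrightarrow> length h = n \<and> (\<forall>r<n. fst (h ! r) \<in> set_pmf (X r))"
proof (induction n arbitrary: h)
  case 0
  then show ?case by simp
next
  case (Suc n)
  then obtain h' x p where h: "h = h' @ [(x, p, c x)]" "h' \<in> set_pmf (vrun L c X n)" "x \<in> set_pmf (X n)"
    by auto
  show ?case using Suc.IH[OF h(2)] h by (auto simp: nth_append less_Suc_eq)
qed

lemma finite_UNIV_opt: "finite (set_pmf (M :: bool option pmf))"
  by (rule finite_subset[of _ UNIV]) auto

lemma finite_vrun: "(\<And>s. s < n \<Longrightarrow> finite (set_pmf (X s))) \<Longrightarrow> finite (set_pmf (vrun L c X n))"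
  by (induction n) (auto simp: finite_UNIV_opt)

lemma finite_grun: "(\<And>s. s < n \<Longrightarrow> finite (set_pmf (X s))) \<Longrightarrow> finite (set_pmf (grun L c X q n))"
  by (induction n) (auto simp: finite_UNIV_opt)

lemma exp_bind:
  fixes g :: "'b \<Rightarrow> real"
  assumes "finite (set_pmf M)" "\<And>x. x \<in> set_pmf M \<Longrightarrow> finite (set_pmf (f x))"
  shows "measure_pmf.expectation (bind_pmf M f) g = measure_pmf.expectation M (\<lambda>x. measure_pmf.expectation (f x) g)"
proof -
  have "measure_pmf.expectation (bind_pmf M f) g = (\<Sum>a\<in>set_pmf M. pmf M a *\<^sub>R measure_pmf.expectation (f a) g)"
    by (rule pmf_expectation_bind) (use assms in auto)
  also have "\<dots> = measure_pmf.expectation M (\<lambda>x. measure_pmf.expectation (f x) g)"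
    by (subst integral_measure_pmf[of "set_pmf M"]) (use assms in auto)
  finally show ?thesis .
qed

lemma exp_agree:
  fixes f :: "'a \<Rightarrow> real"
  assumes "finite (set_pmf M)" "finite (set_pmf N)" "\<And>h. f h \<noteq> 0 \<Longrightarrow> pmf M h = pmf N h"
  shows "measure_pmf.expectation M f = measure_pmf.expectation N f"
proof -
  have "measure_pmf.expectation M f = (\<Sum>a\<in>set_pmf M \<union> set_pmf N. f a * pmf M a)"
    by (rule integral_measure_pmf_real) (use assms in auto)
  also have "\<dots> = (\<Sum>a\<in>set_pmf M \<union> set_pmf N. f a * pmf N a)"
    by (rule sum.cong) (use assms(3) in fastforce)+
  also have "\<dots> = measure_pmf.expectation N f"
    by (rule integral_measure_pmf_real[symmetric]) (use assms in auto)
  finally show ?thesis .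
qed

lemma exp_ge_const:
  fixes f :: "'a \<Rightarrow> real"
  assumes "finite (set_pmf M)" "\<And>x. x \<in> set_pmf M \<Longrightarrow> f x \<ge> c"
  shows "measure_pmf.expectation M f \<ge> c"
proof -
  have "measure_pmf.expectation M (\<lambda>_. c) \<le> measure_pmf.expectation M f"
    by (rule integral_mono_AE) (use assms in \<open>auto simp: integrable_measure_pmf_finite AE_measure_pmf_iff\<close>)
  then show ?thesis by simp
qed

lemma exp_mono:
  fixes f g :: "'a \<Rightarrow> real"
  assumes "finite (set_pmf M)" "\<And>x. x \<in> set_pmf M \<Longrightarrow> f x \<le> g x"
  shows "measure_pmf.expectation M f \<le> measure_pmf.expectation M g"
  by (rule integral_mono_AE) (use assms in \<open>auto simp: integrable_measure_pmf_finite AE_measure_pmf_iff\<close>)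



definition cost :: "nat \<times> bool option \<times> bool \<times> bool \<Rightarrow> real" where
  "cost e = (case e of (x, p, y, qq) \<Rightarrow> (if p \<noteq> None \<and> p \<noteq> Some y then 1 else 0) + (if p = None \<and> \<not> qq then 1 else 0))"

definition errs :: "trace \<Rightarrow> real" where
  "errs h = real (err_mis h) + real (err_abs h)"

lemma errs_Nil[simp]: "errs [] = 0"
  by (simp add: errs_def err_mis_def err_abs_def)

lemma errs_snoc: "errs (h @ [e]) = errs h + cost e"
  by (cases e) (auto simp: errs_def err_mis_def err_abs_def cost_def)

lemma cost_nonneg: "cost e \<ge> 0"
  by (cases e) (auto simp: cost_def)

definition Phi :: "learner \<Rightarrow> (nat \<Rightarrow> bool) \<Rightarrow> (nat \<Rightarrow> nat pmf) \<Rightarrow> (nat \<Rightarrow> bool) \<Rightarrow> nat \<Rightarrow> history \<Rightarrow> real" where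
  "Phi L c X q t vh = measure_pmf.expectation (X t) (\<lambda>x. measure_pmf.expectation (L vh x) (\<lambda>p. cost (x, p, c x, q t)))"

lemma Phi_nonneg: "Phi L c X q t vh \<ge> 0"
  unfolding Phi_def by (intro integral_nonneg_AE AE_I2 cost_nonneg)

lemma exp_add_const:
  fixes f :: "'a \<Rightarrow> real"
  assumes "finite (set_pmf M)"
  shows "measure_pmf.expectation M (\<lambda>x. a + f x) = a + measure_pmf.expectation M f"
  using assms by (simp add: integrable_measure_pmf_finite)

lemma exp_add:
  fixes f g :: "'a \<Rightarrow> real"
  assumes "finite (set_pmf M)"
  shows "measure_pmf.expectation M (\<lambda>x. f x + g x) = measure_pmf.expectation M f + measure_pmf.expectation M g"
  using assms by (simp add: integrable_measure_pmf_finite)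

lemma exp_errs_grun:
  assumes fin: "\<And>s. finite (set_pmf (X s))"
  shows "measure_pmf.expectation (grun L c X q n) errs = (\<Sum>t<n. measure_pmf.expectation (vrun L c X t) (Phi L c X q t))"
proof (induction n)
  case 0
  then show ?case by simp
next
  case (Suc n)
  have fg: "finite (set_pmf (grun L c X q n))" by (rule finite_grun) (rule fin)
  have "measure_pmf.expectation (grun L c X q (Suc n)) errs =
    measure_pmf.expectation (grun L c X q n) (\<lambda>h. measure_pmf.expectation (X n) (\<lambda>x.
      measure_pmf.expectation (L (visible h) x) (\<lambda>p. errs (h @ [(x, p, c x, q n)]))))"
    by (simp add: exp_bind fg fin finite_UNIV_opt)
  also have "\<dots> = measure_pmf.expectation (grun L c X q n) (\<lambda>h. errs h + Phi L c X q n (visible h))"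
    by (simp add: errs_snoc exp_add_const fin finite_UNIV_opt Phi_def)
  also have "\<dots> = measure_pmf.expectation (grun L c X q n) errs + measure_pmf.expectation (grun L c X q n) (\<lambda>h. Phi L c X q n (visible h))"
    by (rule exp_add[OF fg])
  also have "measure_pmf.expectation (grun L c X q n) (\<lambda>h. Phi L c X q n (visible h)) = measure_pmf.expectation (vrun L c X n) (Phi L c X q n)"
    by (simp only: map_visible_grun[of L c X q n, symmetric] integral_map_pmf)
  finally show ?case using Suc by simp
qed



definition pfx :: "nat list \<Rightarrow> nat list \<Rightarrow> bool" where
  "pfx a w \<longleftrightarrow> length a \<le> length w \<and> take (length a) w = a"

definition pc :: "nat list \<Rightarrow> nat \<Rightarrow> bool" where
  "pc w n = pfx (list_decode n) w"

definition chl :: "nat \<Rightarrow> nat list \<Rightarrow> nat pmf" where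
  "chl m v = map_pmf (\<lambda>i. list_encode (v @ [i])) (pmf_of_set {..<2*m})"

definition Sig :: "nat \<Rightarrow> nat list set" where
  "Sig m = {\<sigma>. set \<sigma> \<subseteq> {..<2*m} \<and> length \<sigma> = m}"

definition JS :: "nat \<Rightarrow> (nat \<times> nat list) set" where
  "JS m = {0..m} \<times> Sig m"

definition qw :: "nat \<Rightarrow> nat \<Rightarrow> nat \<Rightarrow> bool" where
  "qw m J = (\<lambda>t. t div m < J)"

definition Xm :: "nat \<Rightarrow> nat \<Rightarrow> nat list \<Rightarrow> nat \<Rightarrow> nat pmf" where
  "Xm m J \<sigma> = (\<lambda>t. if t div m < J then chl m (take (t div m) \<sigma>) else chl m (take J \<sigma>))"

lemma pfx_child:
  assumes "J \<le> length \<sigma>" "b \<le> J"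
  shows "pfx (take b \<sigma> @ [k]) (take J \<sigma>) \<longleftrightarrow> b < J \<and> \<sigma> ! b = k"
proof (cases "b < J")
  case True
  then have bl: "b < length \<sigma>" using assms by simp
  have "take (Suc b) (take J \<sigma>) = take b \<sigma> @ [\<sigma> ! b]"
    using True bl by (simp add: take_Suc_conv_app_nth min_def)
  then show ?thesis using True bl assms by (auto simp: pfx_def min_def)
next
  case False
  then show ?thesis using assms by (auto simp: pfx_def)
qed

lemma finite_Sig: "finite (Sig m)"
  unfolding Sig_def by (rule finite_lists_length_eq) simp

lemma Sig_ne: "replicate m 0 \<in> Sig m" if "m \<ge> 1"
  using that by (auto simp: Sig_def)

lemma ne_lt2m: "(m::nat) \<ge> 1 \<Longrightarrow> {..<2*m} \<noteq> {}"
proof -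
  assume "m \<ge> 1" then have "0 \<in> {..<2*m}" by simp
  then show ?thesis by blast
qed

lemma set_chl: "m \<ge> 1 \<Longrightarrow> set_pmf (chl m v) = (\<lambda>i. list_encode (v @ [i])) ` {..<2*m}"
  by (simp add: chl_def ne_lt2m)

lemma finite_chl: "m \<ge> 1 \<Longrightarrow> finite (set_pmf (chl m v))"
  by (simp add: set_chl)

lemma exp_chl: "m \<ge> 1 \<Longrightarrow> measure_pmf.expectation (chl m v) g = (\<Sum>i<2*m. g (list_encode (v @ [i]))) / real (2*m)"
  by (simp add: chl_def integral_pmf_of_set[OF ne_lt2m])

lemma exp_ind: "measure_pmf.expectation M (\<lambda>p. if p = a then 1 else 0 :: real) = pmf M a"
proof -
  have "measure_pmf.expectation M (\<lambda>p. if p = a then 1 else 0 :: real) = (\<Sum>a'\<in>{a}. (if a' = a then 1 else 0) * pmf M a')"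
    by (rule integral_measure_pmf_real) (auto split: if_splits)
  then show ?thesis by simp
qed

lemma Xm_cong:
  assumes "J \<le> m" "j \<le> J" "t div m = j" "take j \<sigma>' = take j \<sigma>" "r \<le> t"
  shows "Xm m J \<sigma>' r = chl m (take (r div m) \<sigma>)"
proof -
  have rj: "r div m \<le> j" using assms div_le_mono by blast
  have tk: "take (r div m) \<sigma>' = take (r div m) \<sigma>"
    by (metis assms(4) min.absorb1 rj take_take)
  show ?thesis
  proof (cases "r div m < J")
    case True
    then show ?thesis by (simp add: Xm_def tk)
  next
    case False
    then have "J = j" "r div m = j" using rj assms by auto
    then show ?thesis using assms by (simp add: Xm_def)
  qed
qed

lemma vrun_Xm:
  assumes "J \<le> m" "j \<le> J" "t div m = j" "take j \<sigma>' = take j \<sigma>"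
  shows "vrun L c (Xm m J \<sigma>') t = vrun L c (\<lambda>r. chl m (take (r div m) \<sigma>)) t"
  by (rule vrun_cong) (rule Xm_cong[OF assms], simp)

lemma fresh_count:
  assumes m: "m \<ge> 1" and \<sigma>: "length \<sigma> = m" and t: "t < m * m" and j: "j = t div m"
    and h: "vh \<in> set_pmf (vrun L c (\<lambda>r. chl m (take (r div m) \<sigma>)) t)"
  shows "card {i\<in>{..<2*m}. list_encode (take j \<sigma> @ [i]) \<in> fst ` set vh} \<le> t - j * m"
proof -
  have len: "length vh = t" and pts: "\<And>r. r < t \<Longrightarrow> fst (vh ! r) \<in> set_pmf (chl m (take (r div m) \<sigma>))"
    using set_vrun[OF h] by auto
  have jm: "j < m" using t j m by (simp add: less_mult_imp_div_less)
  have "{i\<in>{..<2*m}. list_encode (take j \<sigma> @ [i]) \<in> fst ` set vh} \<subseteq> (\<lambda>r. last (list_decode (fst (vh ! r)))) ` {j*m..<t}"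
  proof
    fix i assume "i \<in> {i\<in>{..<2*m}. list_encode (take j \<sigma> @ [i]) \<in> fst ` set vh}"
    then obtain r where r: "r < t" "fst (vh ! r) = list_encode (take j \<sigma> @ [i])"
      using len by (auto simp: in_set_conv_nth)
    obtain k where k: "fst (vh ! r) = list_encode (take (r div m) \<sigma> @ [k])"
      using pts[OF r(1)] m by (auto simp: set_chl)
    have "take j \<sigma> @ [i] = take (r div m) \<sigma> @ [k]" using r(2) k by (simp add: list_encode_eq)
    then have eq: "length (take j \<sigma>) = length (take (r div m) \<sigma>)" "i = k"
      by (metis append1_eq_conv length_append_singleton nat.inject)+
    have "r div m \<le> j" using r(1) j by (simp add: div_le_mono)
    then have "r div m = j" using eq(1) jm \<sigma> by simp
    then have "j * m \<le> r" by (metis div_times_less_eq_dividend mult.commute)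
    moreover have "last (list_decode (fst (vh ! r))) = i" using r(2) by simp
    ultimately show "i \<in> (\<lambda>r. last (list_decode (fst (vh ! r)))) ` {j*m..<t}" using r(1) by auto
  qed
  then have "card {i\<in>{..<2*m}. list_encode (take j \<sigma> @ [i]) \<in> fst ` set vh} \<le> card ((\<lambda>r. last (list_decode (fst (vh ! r)))) ` {j*m..<t})"
    by (intro card_mono) auto
  also have "\<dots> \<le> card {j*m..<t}" by (rule card_image_le) simp
  finally show ?thesis by simp
qed



lemma key_sigma:
  assumes m: "m \<ge> 1" and \<sigma>: "\<sigma> \<in> Sig m" and t: "t < m * m" and j: "j = t div m"
  shows "measure_pmf.expectation (vrun L (pc (take j \<sigma>)) (Xm m j \<sigma>) t) (Phi L (pc (take j \<sigma>)) (Xm m j \<sigma>) (qw m j) t)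
    + (1 / real (2*m)) * (\<Sum>i0<2*m. \<Sum>J'\<in>{j<..m}.
        measure_pmf.expectation (vrun L (pc (take J' (\<sigma>[j:=i0]))) (Xm m J' (\<sigma>[j:=i0])) t)
          (Phi L (pc (take J' (\<sigma>[j:=i0]))) (Xm m J' (\<sigma>[j:=i0])) (qw m J') t))
    \<ge> (real m - real j) / (4 * real m)"
proof -
  have len\<sigma>: "length \<sigma> = m" using \<sigma> by (simp add: Sig_def)
  have jm: "j < m" using t j m by (simp add: less_mult_imp_div_less)
  define X0 where "X0 = (\<lambda>r. chl m (take (r div m) \<sigma>))"
  define c0 where "c0 = pc (take j \<sigma>)"
  define V where "V = vrun L c0 X0 t"
  define y where "y = (\<lambda>i. list_encode (take j \<sigma> @ [i]))"
  define \<pi> where "\<pi> = (\<lambda>vh i. pmf (L vh (y i)) (Some False))"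
  define fr where "fr = (\<lambda>(vh::history) i. if y i \<in> fst ` set vh then 0 else 1 :: real)"
  have finX0: "\<And>r. finite (set_pmf (X0 r))" using m by (simp add: X0_def finite_chl)
  have finV: "finite (set_pmf V)" unfolding V_def by (rule finite_vrun) (rule finX0)
  have VA: "vrun L (pc (take j \<sigma>)) (Xm m j \<sigma>) t = V"
    unfolding V_def X0_def c0_def by (rule vrun_Xm) (use jm j in auto)
  have XAt: "Xm m J' \<sigma>' t = chl m (take j \<sigma>)" if "j \<le> J'" "J' \<le> m" "take j \<sigma>' = take j \<sigma>" for J' \<sigma>'
    using Xm_cong[OF that(2,1) j[symmetric] that(3), of t] j by simp
  have cost_FF: "(\<lambda>p. cost (x, p, False, False)) = (\<lambda>p. 1 - (if p = Some False then 1 else 0))" for x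
    by (rule ext) (auto simp: cost_def)
  have cost_TT: "(\<lambda>p. cost (x, p, True, True)) = (\<lambda>p. if p = Some False then 1 else 0)" for x
    by (rule ext) (auto simp: cost_def)
  have PhiA: "Phi L (pc (take j \<sigma>)) (Xm m j \<sigma>) (qw m j) t vh = (\<Sum>i<2*m. 1 - \<pi> vh i) / real (2*m)" for vh
  proof -
    have "pc (take j \<sigma>) (y i) = False" for i
      unfolding y_def pc_def using pfx_child[of j \<sigma> j i] len\<sigma> jm by simp
    moreover have "qw m j t = False" using j by (simp add: qw_def)
    moreover have "measure_pmf.expectation (L vh x) (\<lambda>p. 1 - (if p = Some False then 1 else 0 :: real)) = 1 - pmf (L vh x) (Some False)" for x
      by (simp add: integrable_measure_pmf_finite finite_UNIV_opt exp_ind)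
    ultimately show ?thesis
      unfolding Phi_def XAt[OF order_refl less_imp_le[OF jm] refl] exp_chl[OF m]
      by (simp add: y_def cost_FF \<pi>_def)
  qed
  have B: "measure_pmf.expectation (vrun L (pc (take J' (\<sigma>[j:=i0]))) (Xm m J' (\<sigma>[j:=i0])) t)
          (Phi L (pc (take J' (\<sigma>[j:=i0]))) (Xm m J' (\<sigma>[j:=i0])) (qw m J') t)
        \<ge> measure_pmf.expectation V (\<lambda>vh. fr vh i0 * \<pi> vh i0 / real (2*m))"
    if J': "J' \<in> {j<..m}" and i0: "i0 < 2*m" for J' i0
  proof -
    define \<sigma>' where "\<sigma>' = \<sigma>[j:=i0]"
    define c' where "c' = pc (take J' \<sigma>')"
    have tk: "take b \<sigma>' = take b \<sigma>" if "b \<le> j" for b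
      unfolding \<sigma>'_def using that by (simp add: take_update_cancel)
    have len': "length \<sigma>' = m" using len\<sigma> by (simp add: \<sigma>'_def)
    have nth': "\<sigma>' ! j = i0" using len\<sigma> jm by (simp add: \<sigma>'_def)
    have nth'': "\<sigma>' ! b = \<sigma> ! b" if "b < j" for b using that by (simp add: \<sigma>'_def)
    have V': "vrun L c' (Xm m J' \<sigma>') t = vrun L c' X0 t"
      unfolding X0_def by (rule vrun_Xm) (use J' j tk in auto)
    have c'y: "c' (y i0) = True"
      unfolding c'_def y_def pc_def using pfx_child[of J' \<sigma>' j i0] len' J' nth' tk[of j] by simp
    have PhiB: "Phi L c' (Xm m J' \<sigma>') (qw m J') t vh \<ge> \<pi> vh i0 / real (2*m)" for vh
    proof -
      have q: "qw m J' t = True" using J' j by (simp add: qw_def)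
      have nn: "\<And>i. i \<in> {..<2*m} \<Longrightarrow> 0 \<le> measure_pmf.expectation (L vh (list_encode (take j \<sigma> @ [i])))
               (\<lambda>p. cost (list_encode (take j \<sigma> @ [i]), p, c' (list_encode (take j \<sigma> @ [i])), True))"
        by (intro integral_nonneg_AE AE_I2 cost_nonneg)
      have "\<pi> vh i0 = measure_pmf.expectation (L vh (y i0)) (\<lambda>p. cost (y i0, p, c' (y i0), True))"
        unfolding c'y cost_TT exp_ind \<pi>_def ..
      also have "\<dots> \<le> (\<Sum>i<2*m. measure_pmf.expectation (L vh (list_encode (take j \<sigma> @ [i])))
               (\<lambda>p. cost (list_encode (take j \<sigma> @ [i]), p, c' (list_encode (take j \<sigma> @ [i])), True)))"
        unfolding y_def by (rule member_le_sum[of i0 "{..<2*m}", OF _ nn]) (use i0 in auto)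
      moreover have Xt: "Xm m J' \<sigma>' t = chl m (take j \<sigma>)" by (rule XAt) (use J' tk in auto)
      ultimately show ?thesis
        unfolding Phi_def Xt exp_chl[OF m] q
        using J' by (simp add: divide_right_mono)
    qed
    have agree: "pmf (vrun L c' X0 t) vh = pmf V vh" if "y i0 \<notin> fst ` set vh" for vh
      unfolding V_def
    proof (rule vrun_agree[OF _ that])
      fix s x assume s: "s < t" and x: "x \<in> set_pmf (X0 s)" and xy: "x \<noteq> y i0"
      obtain k where k: "x = list_encode (take (s div m) \<sigma> @ [k])"
        using x m by (auto simp: X0_def set_chl)
      have b: "s div m \<le> j" using s j by (simp add: div_le_mono)
      have e1: "c' x = (s div m < J' \<and> \<sigma>' ! (s div m) = k)"
        unfolding c'_def pc_def k using pfx_child[of J' \<sigma>' "s div m" k] len' J' b tk[OF b] by simp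
      have e2: "c0 x = (s div m < j \<and> \<sigma> ! (s div m) = k)"
        unfolding c0_def pc_def k using pfx_child[of j \<sigma> "s div m" k] len\<sigma> jm b by simp
      show "c' x = c0 x"
      proof (cases "s div m < j")
        case True
        then show ?thesis using e1 e2 nth'' J' by auto
      next
        case False
        then have "s div m = j" using b by simp
        then show ?thesis using e1 e2 nth' xy k y_def by auto
      qed
    qed
    have fin': "finite (set_pmf (vrun L c' X0 t))" by (rule finite_vrun) (rule finX0)
    have "measure_pmf.expectation V (\<lambda>vh. fr vh i0 * \<pi> vh i0 / real (2*m))
        = measure_pmf.expectation (vrun L c' X0 t) (\<lambda>vh. fr vh i0 * \<pi> vh i0 / real (2*m))"
      by (rule exp_agree[OF finV fin']) (use agree in \<open>auto simp: fr_def split: if_splits\<close>)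
    also have "\<dots> \<le> measure_pmf.expectation (vrun L c' X0 t) (Phi L c' (Xm m J' \<sigma>') (qw m J') t)"
    proof (rule exp_mono[OF fin'])
      fix vh
      have "fr vh i0 * \<pi> vh i0 / real (2*m) \<le> \<pi> vh i0 / real (2*m)"
        by (auto simp: fr_def \<pi>_def)
      then show "fr vh i0 * \<pi> vh i0 / real (2*m) \<le> Phi L c' (Xm m J' \<sigma>') (qw m J') t vh"
        using PhiB[of vh] by linarith
    qed
    finally show ?thesis unfolding \<sigma>'_def[symmetric] c'_def[symmetric] V' .
  qed
  define g where "g = (\<lambda>i0 vh. fr vh i0 * \<pi> vh i0 / real (2*m))"
  define r where "r = real (m - j) / real (2*m)"
  have r0: "0 \<le> r" and r1: "r \<le> 1" using jm by (auto simp: r_def)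
  have "measure_pmf.expectation (vrun L (pc (take j \<sigma>)) (Xm m j \<sigma>) t) (Phi L (pc (take j \<sigma>)) (Xm m j \<sigma>) (qw m j) t)
    + (1 / real (2*m)) * (\<Sum>i0<2*m. \<Sum>J'\<in>{j<..m}.
        measure_pmf.expectation (vrun L (pc (take J' (\<sigma>[j:=i0]))) (Xm m J' (\<sigma>[j:=i0])) t)
          (Phi L (pc (take J' (\<sigma>[j:=i0]))) (Xm m J' (\<sigma>[j:=i0])) (qw m J') t))
    \<ge> measure_pmf.expectation V (\<lambda>vh. (\<Sum>i<2*m. 1 - \<pi> vh i) / real (2*m))
      + (1 / real (2*m)) * (\<Sum>i0<2*m. \<Sum>J'\<in>{j<..m}. measure_pmf.expectation V (g i0))"
    unfolding VA PhiA g_def by (intro add_left_mono mult_left_mono sum_mono B) auto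
  also have "(\<Sum>i0<2*m. \<Sum>J'\<in>{j<..m}. measure_pmf.expectation V (g i0)) = (\<Sum>i0<2*m. real (m - j) * measure_pmf.expectation V (g i0))"
    by simp
  also have "measure_pmf.expectation V (\<lambda>vh. (\<Sum>i<2*m. 1 - \<pi> vh i) / real (2*m))
      + (1 / real (2*m)) * (\<Sum>i0<2*m. real (m - j) * measure_pmf.expectation V (g i0))
      = measure_pmf.expectation V (\<lambda>vh. (\<Sum>i<2*m. 1 - \<pi> vh i) / real (2*m) + (1 / real (2*m)) * (\<Sum>i0<2*m. real (m - j) * g i0 vh))"
    by (simp add: integrable_measure_pmf_finite[OF finV])
  also have "\<dots> \<ge> (real m - real j) / (4 * real m)"
  proof (rule exp_ge_const[OF finV])
    fix vh assume vh: "vh \<in> set_pmf V"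
    have trm: "(1 - \<pi> vh i) + r * (fr vh i * \<pi> vh i) \<ge> r * fr vh i" for i
    proof -
      have p0: "0 \<le> \<pi> vh i" "\<pi> vh i \<le> 1" by (auto simp: \<pi>_def pmf_le_1)
      have "(1 - \<pi> vh i) * (1 - r) \<ge> 0" using p0 r1 by simp
      then show ?thesis using p0 r0 by (auto simp: fr_def algebra_simps)
    qed
    have eq: "(\<Sum>i<2*m. 1 - \<pi> vh i) / real (2*m) + (1 / real (2*m)) * (\<Sum>i0<2*m. real (m - j) * g i0 vh)
        = (\<Sum>i<2*m. (1 - \<pi> vh i) + r * (fr vh i * \<pi> vh i)) / real (2*m)"
    proof -
      have "(\<Sum>i0<2*m. real (m - j) * g i0 vh) = (\<Sum>i<2*m. r * (fr vh i * \<pi> vh i))"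
        by (rule sum.cong) (simp_all add: g_def r_def)
      then show ?thesis by (simp add: sum.distrib add_divide_distrib)
    qed
    have cnt: "card {i\<in>{..<2*m}. list_encode (take j \<sigma> @ [i]) \<in> fst ` set vh} \<le> t - j * m"
      by (rule fresh_count[OF m _ t j]) (use vh \<sigma> in \<open>auto simp: V_def X0_def Sig_def\<close>)
    have tm: "t - j * m < m" using j m by (metis minus_div_mult_eq_mod mod_less_divisor not_one_le_zero not_gr_zero)
    have "(\<Sum>i<2*m. 1 - fr vh i) = (\<Sum>i\<in>{..<2*m}. if y i \<in> fst ` set vh then 1 else 0)"
      by (rule sum.cong) (auto simp: fr_def)
    also have "\<dots> = real (card {i\<in>{..<2*m}. y i \<in> fst ` set vh})"
      by (simp add: sum.inter_filter[symmetric])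
    finally have "(\<Sum>i<2*m. 1 - fr vh i) \<le> real m" using cnt tm unfolding y_def by linarith
    then have S: "(\<Sum>i<2*m. fr vh i) \<ge> real m" by (simp add: sum_subtractf)
    have "(real m - real j) / (4 * real m) = (r * real m) / real (2*m)"
      using m jm by (simp add: r_def field_simps of_nat_diff)
    also have "\<dots> \<le> (r * (\<Sum>i<2*m. fr vh i)) / real (2*m)"
      using S r0 by (intro divide_right_mono mult_left_mono) auto
    also have "\<dots> = (\<Sum>i<2*m. r * fr vh i) / real (2*m)" by (simp add: sum_distrib_left)
    also have "\<dots> \<le> (\<Sum>i<2*m. (1 - \<pi> vh i) + r * (fr vh i * \<pi> vh i)) / real (2*m)"
      by (intro divide_right_mono sum_mono trm) auto
    finally show "(real m - real j) / (4 * real m) \<le> (\<Sum>i<2*m. 1 - \<pi> vh i) / real (2*m) + (1 / real (2*m)) * (\<Sum>i0<2*m. real (m - j) * g i0 vh)"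
      using eq by simp
  qed
  finally show ?thesis .
qed



lemma reindex_upd:
  fixes G :: "nat list \<Rightarrow> real"
  assumes jm: "j < m"
  shows "(\<Sum>\<sigma>\<in>Sig m. \<Sum>i<2*m. G (\<sigma>[j:=i])) = real (2*m) * (\<Sum>\<sigma>\<in>Sig m. G \<sigma>)"
proof -
  define S where "S = Sig m \<times> {..<2*m}"
  define h where "h = (\<lambda>(\<sigma>::nat list, i::nat). (\<sigma>[j:=i], \<sigma> ! j))"
  have hS: "h p \<in> S" if pS: "p \<in> S" for p
  proof -
    obtain \<sigma> i where p: "p = (\<sigma>, i)" "\<sigma> \<in> Sig m" "i < 2*m" using pS unfolding S_def by blast
    have "\<sigma> ! j \<in> set \<sigma>" using p jm by (simp add: Sig_def)
    then have "\<sigma> ! j < 2*m" using p by (auto simp: Sig_def)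
    moreover have "\<sigma>[j:=i] \<in> Sig m" using p set_update_subset_insert[of \<sigma> j i] by (auto simp: Sig_def)
    ultimately show ?thesis using p by (simp add: S_def h_def)
  qed
  have hh: "h (h p) = p" if "p \<in> S" for p
    using that jm by (auto simp: S_def h_def Sig_def)
  have bij: "bij_betw h S S"
    by (rule bij_betw_byWitness[where f'=h]) (use hS hh in auto)
  have "(\<Sum>\<sigma>\<in>Sig m. \<Sum>i<2*m. G (\<sigma>[j:=i])) = (\<Sum>p\<in>S. G (fst (h p)))"
    by (simp add: S_def sum.cartesian_product h_def case_prod_beta)
  also have "\<dots> = (\<Sum>p\<in>S. G (fst p))"
    using sum.reindex_bij_betw[OF bij, of "\<lambda>p. G (fst p)"] by (simp add: o_def)
  also have "\<dots> = (\<Sum>\<sigma>\<in>Sig m. \<Sum>i<2*m. G \<sigma>)"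
    unfolding S_def sum.cartesian_product by (rule sum.cong) auto
  also have "\<dots> = real (2*m) * (\<Sum>\<sigma>\<in>Sig m. G \<sigma>)"
    by (simp add: sum_distrib_left[symmetric])
  finally show ?thesis .
qed

definition FF :: "learner \<Rightarrow> nat \<Rightarrow> nat \<Rightarrow> nat \<Rightarrow> nat list \<Rightarrow> real" where
  "FF L m t J \<sigma> = measure_pmf.expectation (vrun L (pc (take J \<sigma>)) (Xm m J \<sigma>) t) (Phi L (pc (take J \<sigma>)) (Xm m J \<sigma>) (qw m J) t)"

lemma FF_nonneg: "FF L m t J \<sigma> \<ge> 0"
  unfolding FF_def by (intro integral_nonneg_AE AE_I2 Phi_nonneg)

lemma round_bound:
  assumes m: "m \<ge> 1" and t: "t < m * m"
  shows "(\<Sum>J\<in>{0..m}. \<Sum>\<sigma>\<in>Sig m. FF L m t J \<sigma>) \<ge> real (card (Sig m)) * ((real m - real (t div m)) / (4 * real m))"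
proof -
  define j where "j = t div m"
  have jm: "j < m" using t m by (simp add: j_def less_mult_imp_div_less)
  have "(\<Sum>J\<in>{0..m}. \<Sum>\<sigma>\<in>Sig m. FF L m t J \<sigma>) \<ge> (\<Sum>J\<in>insert j {j<..m}. \<Sum>\<sigma>\<in>Sig m. FF L m t J \<sigma>)"
    by (rule sum_mono2) (use jm in \<open>auto intro!: sum_nonneg FF_nonneg\<close>)
  also have "(\<Sum>J\<in>insert j {j<..m}. \<Sum>\<sigma>\<in>Sig m. FF L m t J \<sigma>) = (\<Sum>\<sigma>\<in>Sig m. FF L m t j \<sigma>) + (\<Sum>J\<in>{j<..m}. \<Sum>\<sigma>\<in>Sig m. FF L m t J \<sigma>)"
    by simp
  also have "(\<Sum>J\<in>{j<..m}. \<Sum>\<sigma>\<in>Sig m. FF L m t J \<sigma>) = (\<Sum>J\<in>{j<..m}. (1 / real (2*m)) * (\<Sum>\<sigma>\<in>Sig m. \<Sum>i<2*m. FF L m t J (\<sigma>[j:=i])))"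
    using m by (simp add: reindex_upd[OF jm])
  also have "\<dots> = (\<Sum>\<sigma>\<in>Sig m. (1 / real (2*m)) * (\<Sum>i<2*m. \<Sum>J\<in>{j<..m}. FF L m t J (\<sigma>[j:=i])))"
  proof -
    have "(\<Sum>J\<in>{j<..m}. (1 / real (2*m)) * (\<Sum>\<sigma>\<in>Sig m. \<Sum>i<2*m. FF L m t J (\<sigma>[j:=i])))
        = (1 / real (2*m)) * (\<Sum>J\<in>{j<..m}. \<Sum>\<sigma>\<in>Sig m. \<Sum>i<2*m. FF L m t J (\<sigma>[j:=i]))"
      by (simp only: sum_distrib_left)
    also have "(\<Sum>J\<in>{j<..m}. \<Sum>\<sigma>\<in>Sig m. \<Sum>i<2*m. FF L m t J (\<sigma>[j:=i]))
        = (\<Sum>\<sigma>\<in>Sig m. \<Sum>J\<in>{j<..m}. \<Sum>i<2*m. FF L m t J (\<sigma>[j:=i]))"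
      by (rule sum.swap)
    also have "\<dots> = (\<Sum>\<sigma>\<in>Sig m. \<Sum>i<2*m. \<Sum>J\<in>{j<..m}. FF L m t J (\<sigma>[j:=i]))"
      by (rule sum.cong[OF refl], rule sum.swap)
    finally show ?thesis by (simp only: sum_distrib_left)
  qed
  also have "(\<Sum>\<sigma>\<in>Sig m. FF L m t j \<sigma>) + \<dots> = (\<Sum>\<sigma>\<in>Sig m. FF L m t j \<sigma> + (1 / real (2*m)) * (\<Sum>i<2*m. \<Sum>J\<in>{j<..m}. FF L m t J (\<sigma>[j:=i])))"
    by (simp add: sum.distrib)
  also have "\<dots> \<ge> (\<Sum>\<sigma>\<in>Sig m. (real m - real j) / (4 * real m))"
    by (rule sum_mono) (unfold FF_def, rule key_sigma[OF m _ t j_def])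
  finally show ?thesis by (simp add: j_def)
qed



lemma pfx_trans: "pfx a b \<Longrightarrow> pfx b c \<Longrightarrow> pfx a c"
  unfolding pfx_def by (metis min.absorb1 order_trans take_take)

lemma pfx_comp: "pfx a w \<Longrightarrow> pfx b w \<Longrightarrow> pfx a b \<or> pfx b a"
  unfolding pfx_def by (metis min.absorb1 nat_le_linear take_take)

lemma vc_pc: "vc_dim (range pc) = 1"
proof -
  define e where "e = list_encode [0]"
  have sh1: "shatters (range pc) {e}"
    unfolding shatters_def
  proof (intro allI impI)
    fix B assume "B \<subseteq> {e}"
    then consider "B = {}" | "B = {e}" by blast
    then show "\<exists>c\<in>range pc. \<forall>x\<in>{e}. c x = (x \<in> B)"
    proof cases
      case 1
      have "\<not> pc [1] e" by (simp add: pc_def pfx_def e_def)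
      then show ?thesis using 1 by blast
    next
      case 2
      have "pc [0] e" by (simp add: pc_def pfx_def e_def)
      then show ?thesis using 2 by blast
    qed
  qed
  have le1: "card S \<le> 1" if fS: "finite S" and sh: "shatters (range pc) S" for S
  proof -
    have "a = b" if a: "a \<in> S" and b: "b \<in> S" for a b
    proof (rule ccontr)
      assume ab: "a \<noteq> b"
      have ex: "\<exists>w. \<forall>x\<in>S. pc w x = (x \<in> B)" if "B \<subseteq> S" for B
        using sh that unfolding shatters_def by blast
      obtain w1 where w1: "\<forall>x\<in>S. pc w1 x = (x \<in> {a, b})" using ex[of "{a,b}"] a b by auto
      then have "pfx (list_decode a) w1" "pfx (list_decode b) w1" using a b by (auto simp: pc_def)
      then consider "pfx (list_decode a) (list_decode b)" | "pfx (list_decode b) (list_decode a)"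
        using pfx_comp by blast
      then show False
      proof cases
        case 1
        obtain w2 where "\<forall>x\<in>S. pc w2 x = (x \<in> {b})" using ex[of "{b}"] b by auto
        then have "pfx (list_decode b) w2" "\<not> pfx (list_decode a) w2" using a b ab by (auto simp: pc_def)
        then show False using 1 pfx_trans by blast
      next
        case 2
        obtain w2 where "\<forall>x\<in>S. pc w2 x = (x \<in> {a})" using ex[of "{a}"] a by auto
        then have "pfx (list_decode a) w2" "\<not> pfx (list_decode b) w2" using a b ab by (auto simp: pc_def)
        then show False using 2 pfx_trans by blast
      qed
    qed
    then show ?thesis using card_le_Suc0_iff_eq[OF fS] by auto
  qed
  show ?thesis
    unfolding vc_dim_def
  proof (rule antisym)
    show "Sup {enat (card S) |S. finite S \<and> shatters (range pc) S} \<le> 1"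
      by (rule Sup_least) (auto simp: one_enat_def dest!: le1)
    have "enat (card {e}) \<in> {enat (card S) |S. finite S \<and> shatters (range pc) S}"
      using sh1 by blast
    then have "enat (card {e}) \<le> Sup {enat (card S) |S. finite S \<and> shatters (range pc) S}"
      by (rule Sup_upper)
    then show "1 \<le> Sup {enat (card S) |S. finite S \<and> shatters (range pc) S}"
      by (simp add: one_enat_def)
  qed
qed

definition Adv :: "nat \<Rightarrow> nat \<Rightarrow> adversary" where
  "Adv m T = bind_pmf (pmf_of_set (JS m)) (\<lambda>(J, \<sigma>). map_pmf (\<lambda>u. (pc (take J \<sigma>), chl m (take J \<sigma>), qw m J,
      \<lambda>t. list_encode (take (t div m) \<sigma> @ [u ! t]))) (ulist (\<lambda>_. pmf_of_set {..<2*m}) T))"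

lemma JS_fin: "finite (JS m)"
  by (simp add: JS_def finite_Sig)

lemma JS_ne: "m \<ge> 1 \<Longrightarrow> JS m \<noteq> {}"
  using Sig_ne[of m] by (auto simp: JS_def)

lemma set_Adv: "m \<ge> 1 \<Longrightarrow> a \<in> set_pmf (Adv m T) \<Longrightarrow> fst a \<in> range pc"
  by (auto simp: Adv_def set_pmf_of_set[OF JS_ne JS_fin])

lemma game_Adv:
  assumes m: "m \<ge> 1"
  shows "game (Adv m T) L T = bind_pmf (pmf_of_set (JS m)) (\<lambda>(J, \<sigma>). grun L (pc (take J \<sigma>)) (Xm m J \<sigma>) (qw m J) T)"
proof -
  have "bind_pmf (ulist (\<lambda>_. pmf_of_set {..<2*m}) T) (\<lambda>u. run L (pc (take J \<sigma>)) (chl m (take J \<sigma>)) (qw m J)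
      (\<lambda>t. list_encode (take (t div m) \<sigma> @ [u ! t])) T) = grun L (pc (take J \<sigma>)) (Xm m J \<sigma>) (qw m J) T" for J \<sigma>
  proof -
    define Y where "Y = (\<lambda>t i. if qw m J t then return_pmf (list_encode (take (t div m) \<sigma> @ [i])) else chl m (take J \<sigma>))"
    have "bind_pmf (ulist (\<lambda>_. pmf_of_set {..<2*m}) T) (\<lambda>u. run L (pc (take J \<sigma>)) (chl m (take J \<sigma>)) (qw m J)
      (\<lambda>t. list_encode (take (t div m) \<sigma> @ [u ! t])) T)
      = bind_pmf (ulist (\<lambda>_. pmf_of_set {..<2*m}) T) (\<lambda>u. grun L (pc (take J \<sigma>)) (\<lambda>t. Y t (u ! t)) (qw m J) T)"
      by (simp add: run_grun Y_def if_distrib)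
    also have "\<dots> = grun L (pc (take J \<sigma>)) (\<lambda>t. bind_pmf (pmf_of_set {..<2*m}) (Y t)) (qw m J) T"
      by (rule mix_grun)
    also have "(\<lambda>t. bind_pmf (pmf_of_set {..<2*m}) (Y t)) = Xm m J \<sigma>"
      by (rule ext) (simp add: Y_def Xm_def qw_def chl_def map_pmf_def)
    finally show ?thesis .
  qed
  then show ?thesis
    unfolding game_def Adv_def
    by (simp add: bind_assoc_pmf bind_map_pmf case_prod_beta split_beta')
qed



lemma gauss_real: "(\<Sum>t<N. real N - real t) = real N * (real N + 1) / 2"
proof (induction N)
  case 0
  then show ?case by simp
next
  case (Suc N)
  have "(\<Sum>t<Suc N. real (Suc N) - real t) = (\<Sum>t<N. (real N - real t) + 1) + 1"
    by (simp add: algebra_simps)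
  also have "\<dots> = real N * (real N + 1) / 2 + real N + 1"
    by (simp add: sum.distrib Suc)
  finally show ?case by (simp add: field_simps)
qed

lemma arith_bound:
  assumes m: "m \<ge> 1"
  shows "(\<Sum>t<m*m. (real m - real (t div m)) / (4 * real m * (real m + 1))) \<ge> real m / 16"
proof -
  define N where "N = m * m"
  have mp: "real m > 0" using m by simp
  have pt: "(real m - real (t div m)) / (4 * real m * (real m + 1)) \<ge> (real N - real t) / (4 * real m * real m * (real m + 1))" for t
  proof -
    have "real (t div m) * real m \<le> real t"
      by (metis div_times_less_eq_dividend of_nat_le_iff of_nat_mult)
    then have "(real N - real t) \<le> (real m - real (t div m)) * real m"
      by (simp add: N_def algebra_simps)
    then have "(real N - real t) / (4 * real m * real m * (real m + 1)) \<le> ((real m - real (t div m)) * real m) / (4 * real m * real m * (real m + 1))"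
      using mp by (intro divide_right_mono) auto
    also have "\<dots> = ((real m - real (t div m)) * real m) / ((4 * real m * (real m + 1)) * real m)"
      by (simp add: algebra_simps)
    also have "\<dots> = (real m - real (t div m)) / (4 * real m * (real m + 1))"
      using mp by (rule nonzero_mult_divide_mult_cancel_right[OF less_imp_neq[symmetric]])
    finally show ?thesis .
  qed
  have "(\<Sum>t<m*m. (real m - real (t div m)) / (4 * real m * (real m + 1))) \<ge> (\<Sum>t<N. (real N - real t) / (4 * real m * real m * (real m + 1)))"
    unfolding N_def by (rule sum_mono) (use pt N_def in auto)
  also have "(\<Sum>t<N. (real N - real t) / (4 * real m * real m * (real m + 1))) = real N * (real N + 1) / 2 / (4 * real m * real m * (real m + 1))"
    by (simp add: sum_divide_distrib[symmetric] gauss_real)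
  also have "\<dots> = ((real m * real m) * (real m * real m + 1)) / ((real m * real m) * (8 * (real m + 1)))"
  proof -
    have a: "real N = real m * real m" by (simp add: N_def)
    have b: "2 * (4 * real m * real m * (real m + 1)) = (real m * real m) * (8 * (real m + 1))" by algebra
    show ?thesis unfolding divide_divide_eq_left b a[symmetric] ..
  qed
  also have "\<dots> = (real m * real m + 1) / (8 * (real m + 1))"
    using mp by (intro nonzero_mult_divide_mult_cancel_left) simp
  finally have 1: "(\<Sum>t<m*m. (real m - real (t div m)) / (4 * real m * (real m + 1))) \<ge> (real m * real m + 1) / (8 * (real m + 1))" .
  have "real m / 16 \<le> (real m * real m + 1) / (8 * (real m + 1))"
  proof -
    have sq: "real m \<le> real m * real m" using mult_left_mono[of 1 "real m" "real m"] m by simp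
    have e: "real m / 16 * (8 * (real m + 1)) = (real m * real m + real m) / 2" by (simp add: field_simps)
    have "real m / 16 * (8 * (real m + 1)) \<le> real m * real m + 1" unfolding e using sq by (simp add: field_simps)
    then show ?thesis using mp by (subst pos_le_divide_eq) auto
  qed
  then show ?thesis using 1 by linarith
qed



lemma finite_Xm: "m \<ge> 1 \<Longrightarrow> finite (set_pmf (Xm m J \<sigma> t))"
  by (simp add: Xm_def finite_chl)

lemma main_bound:
  assumes m: "m \<ge> 1" and mT: "m * m \<le> T"
  shows "measure_pmf.expectation (game (Adv m T) L T) (\<lambda>h. real (err_mis h))
       + measure_pmf.expectation (game (Adv m T) L T) (\<lambda>h. real (err_abs h)) \<ge> real m / 16"
proof -
  define G where "G = game (Adv m T) L T"
  have G_eq: "G = bind_pmf (pmf_of_set (JS m)) (\<lambda>a. grun L (pc (take (fst a) (snd a))) (Xm m (fst a) (snd a)) (qw m (fst a)) T)"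
    unfolding G_def game_Adv[OF m] by (simp add: split_beta')
  have fin_grun: "finite (set_pmf (grun L (pc (take (fst a) (snd a))) (Xm m (fst a) (snd a)) (qw m (fst a)) T))" for a
    by (rule finite_grun) (rule finite_Xm[OF m])
  have finG: "finite (set_pmf G)"
    unfolding G_eq using JS_fin JS_ne[OF m] fin_grun by (simp add: set_pmf_of_set)
  have "measure_pmf.expectation G errs = measure_pmf.expectation G (\<lambda>h. real (err_mis h)) + measure_pmf.expectation G (\<lambda>h. real (err_abs h))"
    unfolding errs_def by (rule exp_add[OF finG])
  moreover have "measure_pmf.expectation G errs \<ge> real m / 16"
  proof -
    have cardJS: "card (JS m) = (m + 1) * card (Sig m)"
      by (simp add: JS_def card_cartesian_product)
    have cSig: "card (Sig m) > 0"
      using Sig_ne[OF m] finite_Sig card_gt_0_iff by blast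
    have "measure_pmf.expectation G errs = (\<Sum>a\<in>JS m. pmf (pmf_of_set (JS m)) a *\<^sub>R
        measure_pmf.expectation (grun L (pc (take (fst a) (snd a))) (Xm m (fst a) (snd a)) (qw m (fst a)) T) errs)"
      unfolding G_eq by (rule pmf_expectation_bind) (use JS_fin fin_grun JS_ne[OF m] in \<open>auto simp: set_pmf_of_set\<close>)
    also have "\<dots> = (\<Sum>a\<in>JS m. (1 / real (card (JS m))) * (\<Sum>t<T. FF L m t (fst a) (snd a)))"
      by (rule sum.cong[OF refl])
         (simp add: pmf_of_set JS_fin JS_ne[OF m] exp_errs_grun[OF finite_Xm[OF m]] FF_def)
    also have "\<dots> = (1 / real (card (JS m))) * (\<Sum>t<T. \<Sum>J\<in>{0..m}. \<Sum>\<sigma>\<in>Sig m. FF L m t J \<sigma>)"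
    proof -
      have cp: "(\<Sum>a\<in>JS m. FF L m t (fst a) (snd a)) = (\<Sum>J\<in>{0..m}. \<Sum>\<sigma>\<in>Sig m. FF L m t J \<sigma>)" for t
        unfolding JS_def sum.cartesian_product by (rule sum.cong) auto
      have "(\<Sum>a\<in>JS m. (1 / real (card (JS m))) * (\<Sum>t<T. FF L m t (fst a) (snd a)))
          = (1 / real (card (JS m))) * (\<Sum>a\<in>JS m. \<Sum>t<T. FF L m t (fst a) (snd a))"
        by (simp only: sum_distrib_left)
      also have "(\<Sum>a\<in>JS m. \<Sum>t<T. FF L m t (fst a) (snd a)) = (\<Sum>t<T. \<Sum>a\<in>JS m. FF L m t (fst a) (snd a))"
        by (rule sum.swap)
      finally show ?thesis by (simp only: cp)
    qed
    also have "\<dots> \<ge> (1 / real (card (JS m))) * (\<Sum>t<m*m. real (card (Sig m)) * ((real m - real (t div m)) / (4 * real m)))"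
    proof (rule mult_left_mono)
      have "(\<Sum>t<m*m. real (card (Sig m)) * ((real m - real (t div m)) / (4 * real m)))
          \<le> (\<Sum>t<m*m. \<Sum>J\<in>{0..m}. \<Sum>\<sigma>\<in>Sig m. FF L m t J \<sigma>)"
        by (rule sum_mono) (rule round_bound[OF m], simp)
      also have "\<dots> \<le> (\<Sum>t<T. \<Sum>J\<in>{0..m}. \<Sum>\<sigma>\<in>Sig m. FF L m t J \<sigma>)"
        by (rule sum_mono2) (use mT in \<open>auto intro!: sum_nonneg FF_nonneg\<close>)
      finally show "(\<Sum>t<m*m. real (card (Sig m)) * ((real m - real (t div m)) / (4 * real m)))
          \<le> (\<Sum>t<T. \<Sum>J\<in>{0..m}. \<Sum>\<sigma>\<in>Sig m. FF L m t J \<sigma>)" .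
    qed simp
    also have "(1 / real (card (JS m))) * (\<Sum>t<m*m. real (card (Sig m)) * ((real m - real (t div m)) / (4 * real m)))
        = (\<Sum>t<m*m. (real m - real (t div m)) / (4 * real m * (real m + 1)))"
      unfolding sum_distrib_left
    proof (rule sum.cong[OF refl])
      fix t
      define S where "S = real (card (Sig m))"
      have S0: "S > 0" using cSig by (simp add: S_def)
      have m0: "real m > 0" using m by simp
      show "1 / real (card (JS m)) * (real (card (Sig m)) * ((real m - real (t div m)) / (4 * real m)))
          = (real m - real (t div m)) / (4 * real m * (real m + 1))"
      proof -
        have cJ: "real (card (JS m)) = (real m + 1) * S" by (simp add: cardJS S_def algebra_simps)
        define d where "d = real m - real (t div m)"
        have "1 / ((real m + 1) * S) * (S * (d / (4 * real m))) = (1 / ((real m + 1) * S) * S) * (d / (4 * real m))"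
          by (simp only: mult.assoc)
        also have "1 / ((real m + 1) * S) * S = 1 / (real m + 1)" using S0 by simp
        also have "1 / (real m + 1) * (d / (4 * real m)) = d / (4 * real m * (real m + 1))"
          by (simp add: mult.commute)
        finally show ?thesis unfolding cJ S_def[symmetric] d_def .
      qed
    qed
    finally show ?thesis using arith_bound[OF m] by linarith
  qed
  ultimately show ?thesis unfolding G_def by linarith
qed



theorem theorem3p1:
  shows "\<exists>\<kappa>::real. \<kappa> > 0 \<and>
    (\<exists>C :: (nat \<Rightarrow> bool) set. vc_dim C = 1 \<and>
      (\<forall>T::nat. T \<ge> 1 \<longrightarrow>
        (\<exists>A :: adversary. (\<forall>a \<in> set_pmf A. fst a \<in> C) \<and>
          (\<forall>L :: learner.
             measure_pmf.expectation (game A L T) (\<lambda>h. real (err_mis h))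
           + measure_pmf.expectation (game A L T) (\<lambda>h. real (err_abs h))
           \<ge> \<kappa> * sqrt (real T)))))"
proof -
  have main: "\<exists>A :: adversary. (\<forall>a \<in> set_pmf A. fst a \<in> range pc) \<and>
          (\<forall>L :: learner.
             measure_pmf.expectation (game A L T) (\<lambda>h. real (err_mis h))
           + measure_pmf.expectation (game A L T) (\<lambda>h. real (err_abs h))
           \<ge> 1 / 32 * sqrt (real T))" if T: "T \<ge> 1" for T :: nat
  proof -
    define m where "m = nat \<lfloor>sqrt (real T)\<rfloor>"
    have s1: "sqrt (real T) \<ge> 1" using T by simp
    have f1: "\<lfloor>sqrt (real T)\<rfloor> \<ge> 1" using s1 by (simp add: le_floor_iff)
    have rm: "real m = real_of_int \<lfloor>sqrt (real T)\<rfloor>" using f1 by (simp add: m_def)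
    have m1: "m \<ge> 1" using nat_mono[OF f1] by (simp add: m_def)
    have le: "real m \<le> sqrt (real T)" using rm by simp
    have lt: "sqrt (real T) < real m + 1" using rm by linarith
    have "real (m * m) \<le> real T"
    proof -
      have "real m * real m \<le> sqrt (real T) * sqrt (real T)"
        using le by (intro mult_mono) auto
      then show ?thesis by simp
    qed
    then have mT: "m * m \<le> T" by (simp only: of_nat_le_iff)
    have sq: "sqrt (real T) \<le> 2 * real m" using lt m1 by simp
    show ?thesis
    proof (intro exI[of _ "Adv m T"] conjI ballI allI)
      fix a assume "a \<in> set_pmf (Adv m T)"
      then show "fst a \<in> range pc" by (rule set_Adv[OF m1])
    next
      fix L
      have "1 / 32 * sqrt (real T) \<le> real m / 16" using sq by simp
      also have "\<dots> \<le> measure_pmf.expectation (game (Adv m T) L T) (\<lambda>h. real (err_mis h))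
           + measure_pmf.expectation (game (Adv m T) L T) (\<lambda>h. real (err_abs h))"
        by (rule main_bound[OF m1 mT])
      finally show "1 / 32 * sqrt (real T) \<le> measure_pmf.expectation (game (Adv m T) L T) (\<lambda>h. real (err_mis h))
           + measure_pmf.expectation (game (Adv m T) L T) (\<lambda>h. real (err_abs h))" .
    qed
  qed
  show ?thesis
    by (rule exI[of _ "1/32"], simp, rule exI[of _ "range pc"]) (use vc_pc main in auto)
qed


end
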